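(* Let $t$ be a positive integer and let $G=K(n_1,\dots,n_s)$ be a complete $s$-partite graph. If $n_j\ge 2t$ for each $j=1,\dots,s$, then $\chi_t(G)=s$.
   Context: $K(n_1,\dots,n_s)$ denotes the complete $s$-partite graph whose parts have $n_1,\dots,n_s$ vertices. A map $f:V(G)\to\{1,\dots,k\}$ is a $t$-relaxed $k$-coloring if every vertex $u$ has at most $t$ neighbors $v$ with $f(v)=f(u)$; $\chi_t(G)$ is the minimum $k$ for which such a coloring exists. *)

theory Defs
  imports Main
begin

text \<open>A simple graph is given by a vertex set V and a symmetric irreflexive
adjacency relation E (only its restriction to V matters).\<close>

definition relaxed_coloring ::
  "'a set \<Rightarrow> ('a \<Rightarrow> 'a \<Rightarrow> bool) \<Rightarrow> nat \<Rightarrow> nat \<Rightarrow> ('a \<Rightarrow> nat) \<Rightarrow> bool" where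
  "relaxed_coloring V E t k f \<longleftrightarrow>
     (\<forall>u\<in>V. f u \<in> {1..k}) \<and>
     (\<forall>u\<in>V. card {v\<in>V. E u v \<and> f v = f u} \<le> t)"

definition relaxed_chromatic_number ::
  "'a set \<Rightarrow> ('a \<Rightarrow> 'a \<Rightarrow> bool) \<Rightarrow> nat \<Rightarrow> nat" where
  "relaxed_chromatic_number V E t = (LEAST k. \<exists>f. relaxed_coloring V E t k f)"

text \<open>Complete s-partite graph K(n_0,...,n_{s-1}): vertex (j,i) is the i-th
vertex of part j; two vertices are adjacent iff they lie in different parts.\<close>

definition cmp_vertices :: "nat \<Rightarrow> (nat \<Rightarrow> nat) \<Rightarrow> (nat \<times> nat) set" where
  "cmp_vertices s n = {(j, i). j < s \<and> i < n j}"

definition cmp_adj :: "nat \<times> nat \<Rightarrow> nat \<times> nat \<Rightarrow> bool" where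
  "cmp_adj u v \<longleftrightarrow> fst u \<noteq> fst v"

end

theory Submission
  imports Defs Complex_Main
begin

lemma cmp_Sigma: "cmp_vertices s n = Sigma {..<s} (\<lambda>j. {..<n j})"
  unfolding cmp_vertices_def by auto

lemma fin_cmp: "finite (cmp_vertices s n)"
  unfolding cmp_Sigma by auto

lemma class_weight:
  fixes t s :: nat and n :: "nat \<Rightarrow> nat"
  assumes t1: "t \<ge> 1" and nb: "\<forall>j<s. n j \<ge> 2 * t"
    and col: "relaxed_coloring (cmp_vertices s n) cmp_adj t k f"
  shows "(\<Sum>v\<in>{v\<in>cmp_vertices s n. f v = c}. 1 / real (n (fst v))) \<le> 1"
proof -
  let ?V = "cmp_vertices s n"
  let ?C = "{v\<in>?V. f v = c}"
  have finC: "finite ?C" using fin_cmp by auto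
  have nbd: "\<And>u. u \<in> ?V \<Longrightarrow> card {v\<in>?V. cmp_adj u v \<and> f v = f u} \<le> t"
    using col unfolding relaxed_coloring_def by auto
  have npos: "\<And>v. v \<in> ?V \<Longrightarrow> n (fst v) \<ge> 2 * t"
    using nb unfolding cmp_vertices_def by auto
  show ?thesis
  proof (cases "\<exists>u1\<in>?C. \<exists>u2\<in>?C. fst u1 \<noteq> fst u2")
    case True
    then obtain u1 u2 where u: "u1 \<in> ?C" "u2 \<in> ?C" "fst u1 \<noteq> fst u2" by blast
    have s1: "{v\<in>?V. cmp_adj u1 v \<and> f v = f u1} = {v\<in>?C. fst v \<noteq> fst u1}"
      using u unfolding cmp_adj_def by auto
    have s2: "{v\<in>?V. cmp_adj u2 v \<and> f v = f u2} = {v\<in>?C. fst v \<noteq> fst u2}"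
      using u unfolding cmp_adj_def by auto
    have sub: "?C \<subseteq> {v\<in>?C. fst v \<noteq> fst u1} \<union> {v\<in>?C. fst v \<noteq> fst u2}"
      using u by auto
    have fU: "finite ({v\<in>?C. fst v \<noteq> fst u1} \<union> {v\<in>?C. fst v \<noteq> fst u2})"
      using fin_cmp by simp
    have "card ?C \<le> card ({v\<in>?C. fst v \<noteq> fst u1} \<union> {v\<in>?C. fst v \<noteq> fst u2})"
      by (rule card_mono[OF fU sub])
    also have "\<dots> \<le> card {v\<in>?C. fst v \<noteq> fst u1} + card {v\<in>?C. fst v \<noteq> fst u2}"
      by (rule card_Un_le)
    also have "\<dots> \<le> 2 * t" using nbd[of u1] nbd[of u2] s1 s2 u by auto
    finally have cC: "card ?C \<le> 2 * t" .
    have "(\<Sum>v\<in>?C. 1 / real (n (fst v))) \<le> (\<Sum>v\<in>?C. 1 / real (2 * t))"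
    proof (rule sum_mono)
      fix v assume "v \<in> ?C"
      hence "n (fst v) \<ge> 2 * t" using npos by auto
      thus "1 / real (n (fst v)) \<le> 1 / real (2 * t)" using t1
        by (intro divide_left_mono) auto
    qed
    also have "\<dots> = real (card ?C) / real (2 * t)" by simp
    also have "\<dots> \<le> 1" using cC t1 by simp
    finally show ?thesis .
  next
    case False
    show ?thesis
    proof (cases "?C = {}")
      case True show ?thesis by (subst True) simp
    next
      case ne: False
      then obtain u0 where u0: "u0 \<in> ?C" by blast
      let ?j = "fst u0"
      have same: "\<And>v. v \<in> ?C \<Longrightarrow> fst v = ?j" using False u0 by blast
      have sub: "?C \<subseteq> {?j} \<times> {..<n ?j}"
        using same unfolding cmp_vertices_def by auto
      have cC: "card ?C \<le> n ?j"
        using card_mono[OF _ sub] by simp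
      have pos: "n ?j > 0" using npos[of u0] u0 t1 by auto
      have "(\<Sum>v\<in>?C. 1 / real (n (fst v))) = (\<Sum>v\<in>?C. 1 / real (n ?j))"
        using same by (intro sum.cong) auto
      also have "\<dots> = real (card ?C) / real (n ?j)" by simp
      also have "\<dots> \<le> 1" using cC pos by simp
      finally show ?thesis .
    qed
  qed
qed

lemma total_weight:
  fixes t s :: nat and n :: "nat \<Rightarrow> nat"
  assumes "\<forall>j<s. n j > 0"
  shows "(\<Sum>v\<in>cmp_vertices s n. 1 / real (n (fst v))) = real s"
proof -
  have "(\<Sum>v\<in>cmp_vertices s n. 1 / real (n (fst v)))
      = (\<Sum>j<s. \<Sum>i<n j. 1 / real (n j))"
    unfolding cmp_Sigma by (subst sum.Sigma) (auto simp: case_prod_beta)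
  also have "\<dots> = (\<Sum>j<s. 1)"
    using assms by (intro sum.cong) auto
  finally show ?thesis by simp
qed

theorem corollary2p3:
  fixes t s :: nat and n :: "nat \<Rightarrow> nat"
  assumes "t \<ge> 1"
    and "\<forall>j<s. n j \<ge> 2 * t"
  shows "relaxed_chromatic_number (cmp_vertices s n) cmp_adj t = s"
proof -
  let ?V = "cmp_vertices s n"
  have good: "relaxed_coloring ?V cmp_adj t s (\<lambda>v. fst v + 1)"
  proof -
    have "{v\<in>?V. cmp_adj u v \<and> fst v + 1 = fst u + 1} = {}" for u
      unfolding cmp_adj_def by auto
    hence e: "\<And>u. {v\<in>?V. cmp_adj u v \<and> fst v + 1 = fst u + 1} = {}" by blast
    show ?thesis unfolding relaxed_coloring_def
    proof (intro conjI ballI)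
      fix u assume "u \<in> ?V" thus "fst u + 1 \<in> {1..s}" by (auto simp: cmp_vertices_def)
    next
      fix u show "card {v\<in>?V. cmp_adj u v \<and> fst v + 1 = fst u + 1} \<le> t"
        by (simp only: e card.empty)
    qed
  qed
  have ex: "\<exists>k f. relaxed_coloring ?V cmp_adj t k f" using good by blast
  have lower: "s \<le> k" if col: "relaxed_coloring ?V cmp_adj t k f" for k f
  proof -
    have pos: "\<forall>j<s. n j > 0" proof (intro allI impI)
      fix j assume "j < s"
      hence "n j \<ge> 2 * t" using assms(2) by blast
      thus "n j > 0" using assms(1) by linarith
    qed
    have img: "f ` ?V \<subseteq> {1..k}" using col unfolding relaxed_coloring_def by auto
    have "real s = (\<Sum>v\<in>?V. 1 / real (n (fst v)))" using total_weight[OF pos] by simp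
    also have "\<dots> = (\<Sum>c\<in>{1..k}. \<Sum>v\<in>{v\<in>?V. f v = c}. 1 / real (n (fst v)))"
      using sum.group[OF fin_cmp _ img, of "\<lambda>v. 1 / real (n (fst v))"] by simp
    also have "\<dots> \<le> (\<Sum>c\<in>{1..k}. 1)"
      by (intro sum_mono class_weight[OF assms col])
    also have "\<dots> = real k" by simp
    finally show ?thesis by simp
  qed
  show ?thesis
    unfolding relaxed_chromatic_number_def
  proof (rule Least_equality)
    show "\<exists>f. relaxed_coloring ?V cmp_adj t s f" using good by blast
  next
    fix y assume "\<exists>f. relaxed_coloring ?V cmp_adj t y f"
    then show "s \<le> y" using lower by blast
  qed
qed

end
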